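(* Let $\mathcal{A}$ and $\mathcal{B}$ be regular languages, let $\mathcal{A}'=\{\otimes(a_1,a_2)\mid a_1,a_2\in\mathcal{A},\ |a_1|=|a_2|\}$, and let $\mathcal{B}'$ be any subset of $\otimes(\mathcal{B},\mathcal{B})=\{\otimes(b_1,b_2)\mid b_1,b_2\in\mathcal{B}\}$ which is a regular language. Let $\Lambda$ be any finite alphabet. Then $$\{\otimes(a_1b_1,\,a_2xb_2),\ \otimes(a_1yb_1,\,a_2b_2)\mid \otimes(a_1,a_2)\in\mathcal{A}',\ \otimes(b_1,b_2)\in\mathcal{B}',\ x,y\in\Lambda\}$$ is a regular language.
   Context: Convolution: for words $w_1,\dots,w_k$ over a finite alphabet and a padding symbol $\diamond$ not in the alphabet, $\otimes(w_1,\dots,w_k)$ is the word of length $\max_i|w_i|$ whose $p$-th letter is the column $(\lambda_1,\dots,\lambda_k)^T$, where $\lambda_r$ is the $p$-th letter of $w_r$ if $p\le|w_r|$ and $\diamond$ otherwise. Juxtaposition such as $a_1b_1$ denotes concatenation of words. *)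

theory Defs
  imports Main
begin

definition regular :: "'a list set \<Rightarrow> bool" where
  "regular L \<longleftrightarrow>
     (\<exists>(Q::nat set) q0 (\<delta>::nat \<Rightarrow> 'a \<Rightarrow> nat) F.
        finite Q \<and> q0 \<in> Q \<and> (\<forall>q\<in>Q. \<forall>a. \<delta> q a \<in> Q) \<and> F \<subseteq> Q \<and>
        L = {w. foldl \<delta> q0 w \<in> F})"

definition conv2 :: "'a list \<Rightarrow> 'a list \<Rightarrow> ('a option \<times> 'a option) list" where
  "conv2 w1 w2 = map (\<lambda>p. (if p < length w1 then Some (w1 ! p) else None,
                           if p < length w2 then Some (w2 ! p) else None))
                     [0..<max (length w1) (length w2)]"

end

theory Submission
  imports Defs
begin


definition Dv :: "'a \<Rightarrow> 'a list set \<Rightarrow> 'a list set" where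
  "Dv a X = {v. a # v \<in> X}"

definition drv :: "'a list set \<Rightarrow> 'a list set set" where
  "drv L = range (\<lambda>u. {v. u @ v \<in> L})"

definition nfam :: "'a list set set \<Rightarrow> bool" where
  "nfam FF \<longleftrightarrow> finite FF \<and> (\<forall>X\<in>FF. \<forall>a. \<exists>S\<subseteq>FF. Dv a X = \<Union>S)"

definition good :: "'a list set \<Rightarrow> bool" where
  "good L \<longleftrightarrow> (\<exists>FF S. nfam FF \<and> S \<subseteq> FF \<and> L = \<Union>S)"

lemma Dv_drv: "D \<in> drv L \<Longrightarrow> Dv a D \<in> drv L"
proof -
  assume "D \<in> drv L"
  then obtain u where "D = {v. u @ v \<in> L}" by (auto simp: drv_def)
  then have "Dv a D = {v. (u @ [a]) @ v \<in> L}" by (auto simp: Dv_def)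
  then show ?thesis unfolding drv_def by (intro range_eqI[where x="u @ [a]"]) simp
qed

lemma self_drv: "L \<in> drv L"
  unfolding drv_def by (rule range_eqI[of _ _ "[]"]) simp

lemma regular_drv: assumes "regular L" shows "finite (drv L)"
proof -
  obtain Q q0 \<delta> F where fin: "finite (Q::nat set)" and q0: "q0 \<in> Q"
    and d: "\<forall>q\<in>Q. \<forall>a. \<delta> q a \<in> Q" and F: "F \<subseteq> Q" and L: "L = {w. foldl \<delta> q0 w \<in> F}"
    using assms unfolding regular_def by blast
  have fQ: "foldl \<delta> q w \<in> Q" if "q \<in> Q" for q w
    using that by (induction w arbitrary: q) (auto simp: d)
  have "drv L \<subseteq> (\<lambda>q. {v. foldl \<delta> q v \<in> F}) ` Q"
  proof
    fix D assume "D \<in> drv L"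
    then obtain u where "D = {v. u @ v \<in> L}" by (auto simp: drv_def)
    then have "D = {v. foldl \<delta> (foldl \<delta> q0 u) v \<in> F}" by (simp add: L)
    then show "D \<in> (\<lambda>q. {v. foldl \<delta> q v \<in> F}) ` Q" using fQ[OF q0] by blast
  qed
  then show ?thesis using fin by (meson finite_imageI finite_subset)
qed

lemma drv_regular: assumes fin: "finite (drv L)" shows "regular L"
proof -
  obtain f :: "'a list set \<Rightarrow> nat" and n where fim: "f ` drv L = {i. i < n}" and inj: "inj_on f (drv L)"
    using finite_imp_inj_to_nat_seg[OF fin] by blast
  define g where "g = inv_into (drv L) f"
  define \<delta> where "\<delta> q a = f (Dv a (g q))" for q a
  have gf: "g (f D) = D" if "D \<in> drv L" for D using inj that by (simp add: g_def)
  have step: "foldl \<delta> (f D) w = f {v. w @ v \<in> D}" if "D \<in> drv L" for D w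
    using that
  proof (induction w arbitrary: D)
    case Nil then show ?case by simp
  next
    case (Cons a w)
    have "foldl \<delta> (f D) (a # w) = foldl \<delta> (f (Dv a D)) w" by (simp add: \<delta>_def gf[OF Cons.prems])
    also have "\<dots> = f {v. w @ v \<in> Dv a D}" using Cons.IH Dv_drv[OF Cons.prems] by blast
    also have "{v. w @ v \<in> Dv a D} = {v. (a # w) @ v \<in> D}" by (simp add: Dv_def)
    finally show ?case .
  qed
  have memd: "{v. w @ v \<in> L} \<in> drv L" for w by (auto simp: drv_def)
  show ?thesis unfolding regular_def
  proof (intro exI conjI)
    show "finite (f ` drv L)" using fin by simp
    show "f L \<in> f ` drv L" using self_drv by blast
    show "\<forall>q\<in>f ` drv L. \<forall>a. \<delta> q a \<in> f ` drv L"
      by (auto simp: \<delta>_def gf intro: Dv_drv)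
    show "f ` {D \<in> drv L. [] \<in> D} \<subseteq> f ` drv L" by blast
    show "L = {w. foldl \<delta> (f L) w \<in> f ` {D \<in> drv L. [] \<in> D}}"
    proof (rule set_eqI)
      fix w
      have "foldl \<delta> (f L) w = f {v. w @ v \<in> L}" using step[OF self_drv] .
      moreover have "(f {v. w @ v \<in> L} \<in> f ` {D \<in> drv L. [] \<in> D}) \<longleftrightarrow> w \<in> L"
      proof
        assume "f {v. w @ v \<in> L} \<in> f ` {D \<in> drv L. [] \<in> D}"
        then obtain D where "D \<in> drv L" "[] \<in> D" "f {v. w @ v \<in> L} = f D" by blast
        then have "{v. w @ v \<in> L} = D" using inj memd[of w] by (auto dest: inj_onD)
        then show "w \<in> L" using \<open>[] \<in> D\<close> by auto
      next
        assume "w \<in> L" then show "f {v. w @ v \<in> L} \<in> f ` {D \<in> drv L. [] \<in> D}"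
          using memd[of w] by auto
      qed
      ultimately show "w \<in> L \<longleftrightarrow> w \<in> {w. foldl \<delta> (f L) w \<in> f ` {D \<in> drv L. [] \<in> D}}" by simp
    qed
  qed
qed

lemma nfam_Union: assumes "nfam FF" "S \<subseteq> FF" shows "\<exists>S'\<subseteq>FF. Dv a (\<Union>S) = \<Union>S'"
proof (intro exI conjI)
  show "{Y\<in>FF. \<exists>X\<in>S. Y \<subseteq> Dv a X} \<subseteq> FF" by blast
  show "Dv a (\<Union>S) = \<Union>{Y\<in>FF. \<exists>X\<in>S. Y \<subseteq> Dv a X}"
  proof
    show "Dv a (\<Union> S) \<subseteq> \<Union> {Y \<in> FF. \<exists>X\<in>S. Y \<subseteq> Dv a X}"
    proof
      fix v assume "v \<in> Dv a (\<Union>S)"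
      then obtain X where X: "X \<in> S" "v \<in> Dv a X" by (auto simp: Dv_def)
      then obtain T where "T \<subseteq> FF" "Dv a X = \<Union>T" using assms unfolding nfam_def by blast
      then show "v \<in> \<Union> {Y \<in> FF. \<exists>X\<in>S. Y \<subseteq> Dv a X}" using X by blast
    qed
    show "\<Union> {Y \<in> FF. \<exists>X\<in>S. Y \<subseteq> Dv a X} \<subseteq> Dv a (\<Union> S)" by (auto simp: Dv_def)
  qed
qed

lemma good_regular: assumes "good L" shows "regular L"
proof -
  obtain FF S where nf: "nfam FF" and S: "S \<subseteq> FF" and L: "L = \<Union>S" using assms unfolding good_def by blast
  define GG where "GG = Union ` Pow FF"
  have fGG: "finite GG" using nf by (simp add: GG_def nfam_def)
  have inGG: "\<Union>T \<in> GG" if "T \<subseteq> FF" for T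
    unfolding GG_def using that by (intro imageI) simp
  have cl: "{v. u @ v \<in> Y} \<in> GG" if "Y \<in> GG" for u Y
    using that
  proof (induction u arbitrary: Y)
    case Nil then show ?case by simp
  next
    case (Cons a u)
    obtain T where T: "T \<subseteq> FF" "Y = \<Union>T" using Cons.prems unfolding GG_def by blast
    obtain T' where T': "T' \<subseteq> FF" "Dv a (\<Union>T) = \<Union>T'" using nfam_Union[OF nf T(1), where a=a] by (elim exE conjE)
    have "Dv a Y \<in> GG" unfolding T(2) T'(2) using T'(1) by (rule inGG)
    then have "{v. u @ v \<in> Dv a Y} \<in> GG" by (rule Cons.IH)
    then show ?case by (simp add: Dv_def)
  qed
  have "L \<in> GG" unfolding L using S by (rule inGG)
  have "drv L \<subseteq> GG"
  proof
    fix D assume "D \<in> drv L"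
    then obtain u where "D = {v. u @ v \<in> L}" unfolding drv_def by blast
    then show "D \<in> GG" using cl[OF \<open>L \<in> GG\<close>, of u] by simp
  qed
  then have "finite (drv L)" using fGG by (rule finite_subset)
  then show ?thesis by (rule drv_regular)
qed

lemma drv_good: assumes "finite (drv L)" shows "good L"
  unfolding good_def
proof (intro exI conjI)
  show "nfam (drv L)" unfolding nfam_def
  proof (intro conjI ballI allI)
    fix X a assume "X \<in> drv L"
    then have "{Dv a X} \<subseteq> drv L" "Dv a X = \<Union>{Dv a X}" using Dv_drv by auto
    then show "\<exists>S\<subseteq>drv L. Dv a X = \<Union> S" by blast
  qed (rule assms)
  show "{L} \<subseteq> drv L" using self_drv by blast
qed simp

lemma good_Un: assumes "good L1" "good L2" shows "good (L1 \<union> L2)"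
proof -
  obtain F1 S1 where 1: "nfam F1" "S1 \<subseteq> F1" "L1 = \<Union>S1" using assms unfolding good_def by blast
  obtain F2 S2 where 2: "nfam F2" "S2 \<subseteq> F2" "L2 = \<Union>S2" using assms unfolding good_def by blast
  have "nfam (F1 \<union> F2)" unfolding nfam_def
  proof (intro conjI ballI allI)
    show "finite (F1 \<union> F2)" using 1 2 by (simp add: nfam_def)
    fix X a assume "X \<in> F1 \<union> F2"
    then show "\<exists>S\<subseteq>F1 \<union> F2. Dv a X = \<Union> S"
    proof
      assume "X \<in> F1" then obtain S where "S \<subseteq> F1" "Dv a X = \<Union>S" using 1 unfolding nfam_def by blast
      then show ?thesis by blast
    next
      assume "X \<in> F2" then obtain S where "S \<subseteq> F2" "Dv a X = \<Union>S" using 2 unfolding nfam_def by blast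
      then show ?thesis by blast
    qed
  qed
  moreover have "S1 \<union> S2 \<subseteq> F1 \<union> F2" using 1 2 by blast
  moreover have "L1 \<union> L2 = \<Union>(S1 \<union> S2)" using 1 2 by blast
  ultimately show ?thesis unfolding good_def by blast
qed

definition cat :: "'a list set \<Rightarrow> 'a list set \<Rightarrow> 'a list set" where
  "cat P M = {u @ v | u v. u \<in> P \<and> v \<in> M}"

lemma Dv_cat: "Dv a (cat X M) = cat (Dv a X) M \<union> (if [] \<in> X then Dv a M else {})"
  by (auto simp: Dv_def cat_def Cons_eq_append_conv)

lemma cat_Union: "cat (\<Union>S) M = \<Union>((\<lambda>X. cat X M) ` S)"
  by (auto simp: cat_def)

lemma good_cat: assumes "good P" "good M" shows "good (cat P M)"
proof -
  obtain F1 S1 where 1: "nfam F1" "S1 \<subseteq> F1" "P = \<Union>S1" using assms unfolding good_def by blast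
  obtain F2 S2 where 2: "nfam F2" "S2 \<subseteq> F2" "M = \<Union>S2" using assms unfolding good_def by blast
  define FF where "FF = (\<lambda>X. cat X M) ` F1 \<union> F2"
  have "nfam FF" unfolding nfam_def
  proof (intro conjI ballI allI)
    show "finite FF" using 1 2 by (simp add: FF_def nfam_def)
    fix Y a assume "Y \<in> FF"
    then consider X where "X \<in> F1" "Y = cat X M" | "Y \<in> F2" by (auto simp: FF_def)
    then show "\<exists>S\<subseteq>FF. Dv a Y = \<Union> S"
    proof cases
      case 1
      obtain T where T: "T \<subseteq> F1" "Dv a X = \<Union>T" using \<open>nfam F1\<close> \<open>X \<in> F1\<close> unfolding nfam_def by blast
      obtain T2 where T2: "T2 \<subseteq> F2" "Dv a M = \<Union>T2" using nfam_Union[OF 2(1,2), where a=a] unfolding 2(3)[symmetric] by (elim exE conjE)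
      show ?thesis
      proof (intro exI conjI)
        show "(\<lambda>X. cat X M) ` T \<union> (if [] \<in> X then T2 else {}) \<subseteq> FF"
          using T(1) T2(1) unfolding FF_def by (auto split: if_splits)
        show "Dv a Y = \<Union>((\<lambda>X. cat X M) ` T \<union> (if [] \<in> X then T2 else {}))"
          unfolding 1(2) Dv_cat T(2) T2(2) cat_Union by (cases "[] \<in> X") (simp_all add: Union_Un_distrib)
      qed
    next
      case 2
      obtain T where "T \<subseteq> F2" "Dv a Y = \<Union>T" using \<open>nfam F2\<close> 2 unfolding nfam_def by blast
      then show ?thesis unfolding FF_def by blast
    qed
  qed
  moreover have "(\<lambda>X. cat X M) ` S1 \<subseteq> FF" using 1 by (auto simp: FF_def)
  moreover have "cat P M = \<Union>((\<lambda>X. cat X M) ` S1)" unfolding 1(3) by (rule cat_Union)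
  ultimately show ?thesis unfolding good_def by (intro exI conjI)
qed



fun cv :: "'a list \<Rightarrow> 'a list \<Rightarrow> ('a option \<times> 'a option) list" where
  "cv [] [] = []"
| "cv (a # x) [] = (Some a, None) # cv x []"
| "cv [] (b # y) = (None, Some b) # cv [] y"
| "cv (a # x) (b # y) = (Some a, Some b) # cv x y"


lemma conv2_cv: "conv2 x y = cv x y"
proof (induction x y rule: cv.induct)
  case 1 then show ?case by (simp add: conv2_def)
next
  case (2 a x)
  have "conv2 (a # x) [] = (Some a, None) # map (\<lambda>p. (if p < length x then Some (x ! p) else None, None)) [0..<length x]"
    unfolding conv2_def by (simp add: upt_conv_Cons map_Suc_upt[symmetric] del: upt_Suc)
  then show ?case using 2 by (simp add: conv2_def)
next
  case (3 b y)
  have "conv2 [] (b # y) = (None, Some b) # map (\<lambda>p. (None, if p < length y then Some (y ! p) else None)) [0..<length y]"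
    unfolding conv2_def by (simp add: upt_conv_Cons map_Suc_upt[symmetric] del: upt_Suc)
  then show ?case using 3 by (simp add: conv2_def)
next
  case (4 a x b y)
  have "conv2 (a # x) (b # y) = (Some a, Some b) # conv2 x y"
    unfolding conv2_def by (simp add: upt_conv_Cons map_Suc_upt[symmetric] del: upt_Suc)
  then show ?case using 4 by simp
qed

lemma cv_dec1: "map the (filter (\<lambda>z. z \<noteq> None) (map fst (cv x y))) = x"
  by (induction x y rule: cv.induct) auto
lemma cv_dec2: "map the (filter (\<lambda>z. z \<noteq> None) (map snd (cv x y))) = y"
  by (induction x y rule: cv.induct) auto

lemma cv_inj: "cv a b = cv c d \<Longrightarrow> a = c \<and> b = d"
  by (metis cv_dec1 cv_dec2)

lemma cv_app: "length a1 = length a2 \<Longrightarrow> cv (a1 @ b1) (a2 @ b2) = cv a1 a2 @ cv b1 b2"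
proof (induction a1 arbitrary: a2)
  case Nil then show ?case by simp
next
  case (Cons a a1) then show ?case by (cases a2) auto
qed



definition PP :: "'a list set \<Rightarrow> 'a list set \<Rightarrow> ('a option \<times> 'a option) list set" where
  "PP D1 D2 = {cv a1 a2 | a1 a2. a1 \<in> D1 \<and> a2 \<in> D2 \<and> length a1 = length a2}"

lemma Dv_PP1: "Dv (Some a, Some b) (PP D1 D2) = PP (Dv a D1) (Dv b D2)"
proof (rule set_eqI, rule iffI)
  fix v assume "v \<in> Dv (Some a, Some b) (PP D1 D2)"
  then obtain a1 a2 where e: "(Some a, Some b) # v = cv a1 a2" "a1 \<in> D1" "a2 \<in> D2" "length a1 = length a2"
    by (auto simp: Dv_def PP_def)
  then obtain x y where "a1 = a # x" "a2 = b # y" "v = cv x y"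
    by (cases a1; cases a2) auto
  then show "v \<in> PP (Dv a D1) (Dv b D2)" using e by (auto simp: PP_def Dv_def)
next
  fix v assume "v \<in> PP (Dv a D1) (Dv b D2)"
  then obtain x y where "v = cv x y" "a # x \<in> D1" "b # y \<in> D2" "length x = length y"
    by (auto simp: PP_def Dv_def)
  then show "v \<in> Dv (Some a, Some b) (PP D1 D2)" unfolding PP_def Dv_def
    by (intro CollectI exI[of _ "a # x"] exI[of _ "b # y"]) simp
qed

lemma Dv_PP2: "fst l = None \<or> snd l = None \<Longrightarrow> Dv l (PP D1 D2) = {}"
proof -
  assume l: "fst l = None \<or> snd l = None"
  { fix v a1 a2 assume "l # v = cv a1 a2" "length a1 = (length a2 :: nat)"
    then have False using l by (cases a1; cases a2) auto }
  then show ?thesis by (auto simp: Dv_def PP_def)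
qed

lemma good_PP: assumes "regular A" shows "good (PP A A)"
proof -
  define DD where "DD = drv A"
  have fD: "finite DD" using regular_drv[OF assms] by (simp add: DD_def)
  define FF where "FF = (\<lambda>(D1, D2). PP D1 D2) ` (DD \<times> DD)"
  have "nfam FF" unfolding nfam_def
  proof (intro conjI ballI allI)
    show "finite FF" using fD by (simp add: FF_def)
    fix X l assume "X \<in> FF"
    then obtain D1 D2 where D: "D1 \<in> DD" "D2 \<in> DD" "X = PP D1 D2" by (auto simp: FF_def)
    show "\<exists>S\<subseteq>FF. Dv l X = \<Union> S"
    proof (cases "\<exists>a b. l = (Some a, Some b)")
      case True
      then obtain a b where l: "l = (Some a, Some b)" by blast
      have m: "PP (Dv a D1) (Dv b D2) \<in> FF" using D Dv_drv unfolding FF_def DD_def by fastforce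
      have "Dv l X = \<Union>{PP (Dv a D1) (Dv b D2)}" unfolding l D(3) Dv_PP1 by simp
      then show ?thesis using m by blast
    next
      case False
      then have "fst l = None \<or> snd l = None" by (cases l) auto
      then have "Dv l X = \<Union>{}" unfolding D(3) by (simp add: Dv_PP2)
      then show ?thesis by blast
    qed
  qed
  moreover have "PP A A \<in> FF" using self_drv unfolding FF_def DD_def by fastforce
  ultimately show ?thesis unfolding good_def by (intro exI[of _ FF] exI[of _ "{PP A A}"]) auto
qed

definition KK :: "('a option \<times> 'a option) list set \<Rightarrow> 'a \<Rightarrow> ('a option \<times> 'a option) list set" where
  "KK D c = {cv b1 (c # b2) | b1 b2. cv b1 b2 \<in> D}"
definition KL :: "('a option \<times> 'a option) list set \<Rightarrow> 'a \<Rightarrow> ('a option \<times> 'a option) list set" where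
  "KL D c = {cv (c # b1) b2 | b1 b2. cv b1 b2 \<in> D}"
definition EE :: "('a option \<times> 'a option) list set \<Rightarrow> ('a option \<times> 'a option) list set" where
  "EE D = {cv b [] | b. cv b [] \<in> D}"
definition FFF :: "('a option \<times> 'a option) list set \<Rightarrow> ('a option \<times> 'a option) list set" where
  "FFF D = {cv [] b | b. cv [] b \<in> D}"

lemma Dv_KK1: "Dv (Some a, Some c) (KK D c) = (\<Union>d. KK (Dv (Some a, Some d) D) d) \<union> EE (Dv (Some a, None) D)"
proof (rule set_eqI, rule iffI)
  fix v assume "v \<in> Dv (Some a, Some c) (KK D c)"
  then obtain b1 b2 where e: "(Some a, Some c) # v = cv b1 (c # b2)" "cv b1 b2 \<in> D"
    by (auto simp: Dv_def KK_def)
  then obtain x where b1: "b1 = a # x" and v: "v = cv x b2" by (cases b1) auto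
  show "v \<in> (\<Union>d. KK (Dv (Some a, Some d) D) d) \<union> EE (Dv (Some a, None) D)"
  proof (cases b2)
    case Nil
    then show ?thesis using e b1 v by (auto simp: EE_def Dv_def)
  next
    case (Cons d y)
    then have "v \<in> KK (Dv (Some a, Some d) D) d" using e b1 v by (auto simp: KK_def Dv_def)
    then show ?thesis by blast
  qed
next
  fix v assume "v \<in> (\<Union>d. KK (Dv (Some a, Some d) D) d) \<union> EE (Dv (Some a, None) D)"
  then show "v \<in> Dv (Some a, Some c) (KK D c)"
  proof
    assume "v \<in> (\<Union>d. KK (Dv (Some a, Some d) D) d)"
    then obtain d x y where "v = cv x (d # y)" "cv (a # x) (d # y) \<in> D"
      by (auto simp: KK_def Dv_def)
    then show ?thesis unfolding KK_def Dv_def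
      by (intro CollectI exI[of _ "a # x"] exI[of _ "d # y"]) simp
  next
    assume "v \<in> EE (Dv (Some a, None) D)"
    then obtain x where "v = cv x []" "cv (a # x) [] \<in> D"
      by (auto simp: EE_def Dv_def)
    then show ?thesis unfolding KK_def Dv_def
      by (intro CollectI exI[of _ "a # x"] exI[of _ "[]"]) simp
  qed
qed

lemma Dv_KK2: "Dv (None, Some c) (KK D c) = FFF D"
proof (rule set_eqI, rule iffI)
  fix v assume "v \<in> Dv (None, Some c) (KK D c)"
  then obtain b1 b2 where e: "(None, Some c) # v = cv b1 (c # b2)" "cv b1 b2 \<in> D"
    by (auto simp: Dv_def KK_def)
  then have "b1 = []" by (cases b1) auto
  then show "v \<in> FFF D" using e by (auto simp: FFF_def)
next
  fix v assume "v \<in> FFF D"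
  then obtain y where "v = cv [] y" "cv [] y \<in> D" by (auto simp: FFF_def)
  then show "v \<in> Dv (None, Some c) (KK D c)" unfolding KK_def Dv_def
    by (intro CollectI exI[of _ "[]"] exI[of _ y]) simp
qed

lemma Dv_KK3: "snd l \<noteq> Some c \<Longrightarrow> Dv l (KK D c) = {}"
proof -
  assume l: "snd l \<noteq> Some c"
  { fix v b1 b2 assume "l # v = cv b1 (c # b2)"
    then have False using l by (cases b1) auto }
  then show ?thesis by (auto simp: Dv_def KK_def)
qed

lemma Dv_KL1: "Dv (Some c, Some b) (KL D c) = (\<Union>d. KL (Dv (Some d, Some b) D) d) \<union> FFF (Dv (None, Some b) D)"
proof (rule set_eqI, rule iffI)
  fix v assume "v \<in> Dv (Some c, Some b) (KL D c)"
  then obtain b1 b2 where e: "(Some c, Some b) # v = cv (c # b1) b2" "cv b1 b2 \<in> D"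
    by (auto simp: Dv_def KL_def)
  then obtain y where b2: "b2 = b # y" and v: "v = cv b1 y" by (cases b2) auto
  show "v \<in> (\<Union>d. KL (Dv (Some d, Some b) D) d) \<union> FFF (Dv (None, Some b) D)"
  proof (cases b1)
    case Nil
    then show ?thesis using e b2 v by (auto simp: FFF_def Dv_def)
  next
    case (Cons d x)
    then have "v \<in> KL (Dv (Some d, Some b) D) d" using e b2 v by (auto simp: KL_def Dv_def)
    then show ?thesis by blast
  qed
next
  fix v assume "v \<in> (\<Union>d. KL (Dv (Some d, Some b) D) d) \<union> FFF (Dv (None, Some b) D)"
  then show "v \<in> Dv (Some c, Some b) (KL D c)"
  proof
    assume "v \<in> (\<Union>d. KL (Dv (Some d, Some b) D) d)"
    then obtain d x y where "v = cv (d # x) y" "cv (d # x) (b # y) \<in> D"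
      by (auto simp: KL_def Dv_def)
    then show ?thesis unfolding KL_def Dv_def
      by (intro CollectI exI[of _ "d # x"] exI[of _ "b # y"]) simp
  next
    assume "v \<in> FFF (Dv (None, Some b) D)"
    then obtain y where "v = cv [] y" "cv [] (b # y) \<in> D"
      by (auto simp: FFF_def Dv_def)
    then show ?thesis unfolding KL_def Dv_def
      by (intro CollectI exI[of _ "[]"] exI[of _ "b # y"]) simp
  qed
qed

lemma Dv_KL2: "Dv (Some c, None) (KL D c) = EE D"
proof (rule set_eqI, rule iffI)
  fix v assume "v \<in> Dv (Some c, None) (KL D c)"
  then obtain b1 b2 where e: "(Some c, None) # v = cv (c # b1) b2" "cv b1 b2 \<in> D"
    by (auto simp: Dv_def KL_def)
  then have "b2 = []" by (cases b2) auto
  then show "v \<in> EE D" using e by (auto simp: EE_def)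
next
  fix v assume "v \<in> EE D"
  then obtain y where "v = cv y []" "cv y [] \<in> D" by (auto simp: EE_def)
  then show "v \<in> Dv (Some c, None) (KL D c)" unfolding KL_def Dv_def
    by (intro CollectI exI[of _ y] exI[of _ "[]"]) simp
qed

lemma Dv_KL3: "fst l \<noteq> Some c \<Longrightarrow> Dv l (KL D c) = {}"
proof -
  assume l: "fst l \<noteq> Some c"
  { fix v b1 b2 assume "l # v = cv (c # b1) b2"
    then have False using l by (cases b2) auto }
  then show ?thesis by (auto simp: Dv_def KL_def)
qed

lemma Dv_EE1: "Dv (Some a, None) (EE D) = EE (Dv (Some a, None) D)"
proof (rule set_eqI, rule iffI)
  fix v assume "v \<in> Dv (Some a, None) (EE D)"
  then obtain b where e: "(Some a, None) # v = cv b []" "cv b [] \<in> D" by (auto simp: Dv_def EE_def)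
  then obtain x where "b = a # x" "v = cv x []" by (cases b) auto
  then show "v \<in> EE (Dv (Some a, None) D)" using e by (auto simp: EE_def Dv_def)
next
  fix v assume "v \<in> EE (Dv (Some a, None) D)"
  then obtain x where "v = cv x []" "cv (a # x) [] \<in> D" by (auto simp: EE_def Dv_def)
  then show "v \<in> Dv (Some a, None) (EE D)" unfolding EE_def Dv_def
    by (intro CollectI exI[of _ "a # x"]) simp
qed

lemma Dv_EE2: "fst l = None \<or> snd l \<noteq> None \<Longrightarrow> Dv l (EE D) = {}"
proof -
  assume l: "fst l = None \<or> snd l \<noteq> None"
  { fix v b assume "l # v = cv b []"
    then have False using l by (cases b) auto }
  then show ?thesis by (auto simp: Dv_def EE_def)
qed

lemma Dv_FF1: "Dv (None, Some a) (FFF D) = FFF (Dv (None, Some a) D)"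
proof (rule set_eqI, rule iffI)
  fix v assume "v \<in> Dv (None, Some a) (FFF D)"
  then obtain b where e: "(None, Some a) # v = cv [] b" "cv [] b \<in> D" by (auto simp: Dv_def FFF_def)
  then obtain x where "b = a # x" "v = cv [] x" by (cases b) auto
  then show "v \<in> FFF (Dv (None, Some a) D)" using e by (auto simp: FFF_def Dv_def)
next
  fix v assume "v \<in> FFF (Dv (None, Some a) D)"
  then obtain x where "v = cv [] x" "cv [] (a # x) \<in> D" by (auto simp: FFF_def Dv_def)
  then show "v \<in> Dv (None, Some a) (FFF D)" unfolding FFF_def Dv_def
    by (intro CollectI exI[of _ "a # x"]) simp
qed

lemma Dv_FF2: "fst l \<noteq> None \<or> snd l = None \<Longrightarrow> Dv l (FFF D) = {}"
proof -
  assume l: "fst l \<noteq> None \<or> snd l = None"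
  { fix v b assume "l # v = cv [] b"
    then have False using l by (cases b) auto }
  then show ?thesis by (auto simp: Dv_def FFF_def)
qed



lemma exS: "Y = \<Union>S \<Longrightarrow> S \<subseteq> FF \<Longrightarrow> \<exists>S\<subseteq>FF. Y = \<Union>S" by blast

lemma good_KK: fixes L :: "('a::finite option \<times> 'a option) list set"
  assumes "regular L" shows "good (\<Union>x\<in>\<Lambda>. KK L x)"
proof -
  define DD where "DD = drv L"
  have fD: "finite DD" using regular_drv[OF assms] by (simp add: DD_def)
  have dD: "Dv l D \<in> DD" if "D \<in> DD" for l D using that unfolding DD_def by (rule Dv_drv)
  define FF where "FF = (\<lambda>(D, c). KK D c) ` (DD \<times> UNIV) \<union> EE ` DD \<union> FFF ` DD"
  have KF: "KK D c \<in> FF" if "D \<in> DD" for D c unfolding FF_def by (rule UnI1, rule UnI1, rule image_eqI[where x="(D, c)"]) (simp_all add: that)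
  have EF: "EE D \<in> FF" if "D \<in> DD" for D unfolding FF_def by (rule UnI1, rule UnI2, rule imageI, rule that)
  have FF': "FFF D \<in> FF" if "D \<in> DD" for D unfolding FF_def by (rule UnI2, rule imageI, rule that)
  have "nfam FF" unfolding nfam_def
  proof (intro conjI ballI allI)
    show "finite FF" using fD by (simp add: FF_def)
    fix X and l :: "'a option \<times> 'a option" assume "X \<in> FF"
    obtain o1 o2 where l: "l = (o1, o2)" by (cases l)
    from \<open>X \<in> FF\<close> consider D c where "D \<in> DD" "X = KK D c" | D where "D \<in> DD" "X = EE D"
      | D where "D \<in> DD" "X = FFF D" unfolding FF_def by (elim UnE imageE) auto
    then show "\<exists>S\<subseteq>FF. Dv l X = \<Union> S"
    proof cases
      case 1
      show ?thesis
      proof (cases "o2 = Some c")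
        case True
        show ?thesis
        proof (cases o1)
          case None
          have "Dv l X = \<Union>{FFF D}" unfolding 1(2) l None True Dv_KK2 by simp
          then show ?thesis by (rule exS) (use FF' 1(1) in simp)
        next
          case (Some a)
          have "Dv l X = \<Union>(range (\<lambda>d. KK (Dv (Some a, Some d) D) d) \<union> {EE (Dv (Some a, None) D)})"
            unfolding 1(2) l Some True Dv_KK1 by (simp add: Un_commute)
          moreover have "range (\<lambda>d. KK (Dv (Some a, Some d) D) d) \<union> {EE (Dv (Some a, None) D)} \<subseteq> FF"
            using 1(1) by (auto intro!: KF EF FF' dD)
          ultimately show ?thesis by (rule exS)
        qed
      next
        case False
        then have "Dv l X = \<Union>{}" unfolding 1(2) l by (simp add: Dv_KK3)
        then show ?thesis by (rule exS) simp
      qed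
    next
      case 2
      show ?thesis
      proof (cases "\<exists>a. l = (Some a, None)")
        case True
        then obtain a where la: "l = (Some a, None)" by blast
        have "Dv l X = \<Union>{EE (Dv l D)}" unfolding 2(2) la Dv_EE1 by simp
        then show ?thesis by (rule exS) (use EF dD 2(1) in simp)
      next
        case False
        then have "fst l = None \<or> snd l \<noteq> None" by (cases l) auto
        then have "Dv l X = \<Union>{}" unfolding 2(2) by (simp add: Dv_EE2)
        then show ?thesis by (rule exS) simp
      qed
    next
      case 3
      show ?thesis
      proof (cases "\<exists>a. l = (None, Some a)")
        case True
        then obtain a where la: "l = (None, Some a)" by blast
        have "Dv l X = \<Union>{FFF (Dv l D)}" unfolding 3(2) la Dv_FF1 by simp
        then show ?thesis by (rule exS) (use FF' dD 3(1) in simp)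
      next
        case False
        then have "fst l \<noteq> None \<or> snd l = None" by (cases l) auto
        then have "Dv l X = \<Union>{}" unfolding 3(2) by (simp add: Dv_FF2)
        then show ?thesis by (rule exS) simp
      qed
    qed
  qed
  moreover have "(\<lambda>x. KK L x) ` \<Lambda> \<subseteq> FF" by (auto intro!: KF simp: DD_def self_drv)
  ultimately show ?thesis unfolding good_def by (intro exI conjI) auto
qed

lemma good_KL: fixes L :: "('a::finite option \<times> 'a option) list set"
  assumes "regular L" shows "good (\<Union>x\<in>\<Lambda>. KL L x)"
proof -
  define DD where "DD = drv L"
  have fD: "finite DD" using regular_drv[OF assms] by (simp add: DD_def)
  have dD: "Dv l D \<in> DD" if "D \<in> DD" for l D using that unfolding DD_def by (rule Dv_drv)
  define FF where "FF = (\<lambda>(D, c). KL D c) ` (DD \<times> UNIV) \<union> EE ` DD \<union> FFF ` DD"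
  have KF: "KL D c \<in> FF" if "D \<in> DD" for D c unfolding FF_def by (rule UnI1, rule UnI1, rule image_eqI[where x="(D, c)"]) (simp_all add: that)
  have EF: "EE D \<in> FF" if "D \<in> DD" for D unfolding FF_def by (rule UnI1, rule UnI2, rule imageI, rule that)
  have FF': "FFF D \<in> FF" if "D \<in> DD" for D unfolding FF_def by (rule UnI2, rule imageI, rule that)
  have "nfam FF" unfolding nfam_def
  proof (intro conjI ballI allI)
    show "finite FF" using fD by (simp add: FF_def)
    fix X and l :: "'a option \<times> 'a option" assume "X \<in> FF"
    obtain o1 o2 where l: "l = (o1, o2)" by (cases l)
    from \<open>X \<in> FF\<close> consider D c where "D \<in> DD" "X = KL D c" | D where "D \<in> DD" "X = EE D"
      | D where "D \<in> DD" "X = FFF D" unfolding FF_def by (elim UnE imageE) auto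
    then show "\<exists>S\<subseteq>FF. Dv l X = \<Union> S"
    proof cases
      case 1
      show ?thesis
      proof (cases "o1 = Some c")
        case True
        show ?thesis
        proof (cases o2)
          case None
          have "Dv l X = \<Union>{EE D}" unfolding 1(2) l None True Dv_KL2 by simp
          then show ?thesis by (rule exS) (use EF 1(1) in simp)
        next
          case (Some b)
          have "Dv l X = \<Union>(range (\<lambda>d. KL (Dv (Some d, Some b) D) d) \<union> {FFF (Dv (None, Some b) D)})"
            unfolding 1(2) l Some True Dv_KL1 by (simp add: Un_commute)
          moreover have "range (\<lambda>d. KL (Dv (Some d, Some b) D) d) \<union> {FFF (Dv (None, Some b) D)} \<subseteq> FF"
            using 1(1) by (auto intro!: KF EF FF' dD)
          ultimately show ?thesis by (rule exS)
        qed
      next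
        case False
        then have "Dv l X = \<Union>{}" unfolding 1(2) l by (simp add: Dv_KL3)
        then show ?thesis by (rule exS) simp
      qed
    next
      case 2
      show ?thesis
      proof (cases "\<exists>a. l = (Some a, None)")
        case True
        then obtain a where la: "l = (Some a, None)" by blast
        have "Dv l X = \<Union>{EE (Dv l D)}" unfolding 2(2) la Dv_EE1 by simp
        then show ?thesis by (rule exS) (use EF dD 2(1) in simp)
      next
        case False
        then have "fst l = None \<or> snd l \<noteq> None" by (cases l) auto
        then have "Dv l X = \<Union>{}" unfolding 2(2) by (simp add: Dv_EE2)
        then show ?thesis by (rule exS) simp
      qed
    next
      case 3
      show ?thesis
      proof (cases "\<exists>a. l = (None, Some a)")
        case True
        then obtain a where la: "l = (None, Some a)" by blast
        have "Dv l X = \<Union>{FFF (Dv l D)}" unfolding 3(2) la Dv_FF1 by simp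
        then show ?thesis by (rule exS) (use FF' dD 3(1) in simp)
      next
        case False
        then have "fst l \<noteq> None \<or> snd l = None" by (cases l) auto
        then have "Dv l X = \<Union>{}" unfolding 3(2) by (simp add: Dv_FF2)
        then show ?thesis by (rule exS) simp
      qed
    qed
  qed
  moreover have "(\<lambda>x. KL L x) ` \<Lambda> \<subseteq> FF" by (auto intro!: KF simp: DD_def self_drv)
  ultimately show ?thesis unfolding good_def by (intro exI conjI) auto
qed

lemma PP_mem: "cv a1 a2 \<in> PP D1 D2 \<Longrightarrow> a1 \<in> D1 \<and> a2 \<in> D2 \<and> length a1 = length a2"
  unfolding PP_def by (auto dest: cv_inj)

theorem lemma3p5:
  fixes A B :: "('a::finite) list set"
    and B' :: "('a option \<times> 'a option) list set"
    and \<Lambda> :: "'a set"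
  assumes "regular A" and "regular B"
    and "B' \<subseteq> {conv2 b1 b2 | b1 b2. b1 \<in> B \<and> b2 \<in> B}"
    and "regular B'"
  defines "A' \<equiv> {conv2 a1 a2 | a1 a2. a1 \<in> A \<and> a2 \<in> A \<and> length a1 = length a2}"
  shows "regular {w. \<exists>a1 a2 b1 b2 x y.
                    conv2 a1 a2 \<in> A' \<and> conv2 b1 b2 \<in> B' \<and> x \<in> \<Lambda> \<and> y \<in> \<Lambda> \<and>
                    (w = conv2 (a1 @ b1) (a2 @ [x] @ b2) \<or>
                     w = conv2 (a1 @ [y] @ b1) (a2 @ b2))}"
proof -
  have A': "A' = PP A A" unfolding A'_def PP_def conv2_cv ..
  let ?R = "(\<Union>x\<in>\<Lambda>. KK B' x) \<union> (\<Union>x\<in>\<Lambda>. KL B' x)"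
  have eq: "{w. \<exists>a1 a2 b1 b2 x y.
                    conv2 a1 a2 \<in> A' \<and> conv2 b1 b2 \<in> B' \<and> x \<in> \<Lambda> \<and> y \<in> \<Lambda> \<and>
                    (w = conv2 (a1 @ b1) (a2 @ [x] @ b2) \<or>
                     w = conv2 (a1 @ [y] @ b1) (a2 @ b2))} = cat (PP A A) ?R"
    (is "?L = _")
  proof (rule set_eqI, rule iffI)
    fix w assume "w \<in> ?L"
    then obtain a1 a2 b1 b2 x y where h: "cv a1 a2 \<in> PP A A" "cv b1 b2 \<in> B'" "x \<in> \<Lambda>" "y \<in> \<Lambda>"
      "w = cv (a1 @ b1) (a2 @ [x] @ b2) \<or> w = cv (a1 @ [y] @ b1) (a2 @ b2)"
      unfolding A' conv2_cv by blast
    have len: "length a1 = length a2" using PP_mem[OF h(1)] by blast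
    from h(5) show "w \<in> cat (PP A A) ?R"
    proof
      assume "w = cv (a1 @ b1) (a2 @ [x] @ b2)"
      then have "w = cv a1 a2 @ cv b1 (x # b2)" using cv_app[OF len] by simp
      moreover have "cv b1 (x # b2) \<in> ?R" using h(2,3) unfolding KK_def by blast
      ultimately show ?thesis using h(1) unfolding cat_def by blast
    next
      assume "w = cv (a1 @ [y] @ b1) (a2 @ b2)"
      then have "w = cv a1 a2 @ cv (y # b1) b2" using cv_app[OF len] by simp
      moreover have "cv (y # b1) b2 \<in> ?R" using h(2,4) unfolding KL_def by blast
      ultimately show ?thesis using h(1) unfolding cat_def by blast
    qed
  next
    fix w assume "w \<in> cat (PP A A) ?R"
    then obtain u v where w: "w = u @ v" "u \<in> PP A A" "v \<in> ?R" unfolding cat_def by blast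
    then obtain a1 a2 where u: "u = cv a1 a2" "a1 \<in> A" "a2 \<in> A" "length a1 = length a2"
      unfolding PP_def by blast
    from w(3) show "w \<in> ?L"
    proof
      assume "v \<in> (\<Union>x\<in>\<Lambda>. KK B' x)"
      then obtain x b1 b2 where v: "x \<in> \<Lambda>" "v = cv b1 (x # b2)" "cv b1 b2 \<in> B'" unfolding KK_def by blast
      have "w = cv (a1 @ b1) (a2 @ [x] @ b2)" using cv_app[OF u(4)] w(1) u(1) v(2) by simp
      moreover have "cv a1 a2 \<in> PP A A" using u unfolding PP_def by blast
      ultimately show ?thesis unfolding A' conv2_cv mem_Collect_eq
        by (intro exI[of _ a1] exI[of _ a2] exI[of _ b1] exI[of _ b2] exI[of _ x] exI[of _ x]) (use v in simp)
    next
      assume "v \<in> (\<Union>x\<in>\<Lambda>. KL B' x)"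
      then obtain y b1 b2 where v: "y \<in> \<Lambda>" "v = cv (y # b1) b2" "cv b1 b2 \<in> B'" unfolding KL_def by blast
      have "w = cv (a1 @ [y] @ b1) (a2 @ b2)" using cv_app[OF u(4)] w(1) u(1) v(2) by simp
      moreover have "cv a1 a2 \<in> PP A A" using u unfolding PP_def by blast
      ultimately show ?thesis unfolding A' conv2_cv mem_Collect_eq
        by (intro exI[of _ a1] exI[of _ a2] exI[of _ b1] exI[of _ b2] exI[of _ y] exI[of _ y]) (use v in simp)
    qed
  qed
  have "good (cat (PP A A) ?R)"
    by (intro good_cat good_PP good_Un good_KK good_KL assms)
  then show ?thesis unfolding eq by (rule good_regular)
qed

end
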